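(* For all non-negative integers $p,q,r$ with $p+q\le r$, $\lambda_{\min}(\mathcal{Q}_{p,q,r})\ge-\tau$, where $\tau=\frac{1+\sqrt5}{2}$.
   Context: An edge-signed graph is a finite simple graph each of whose edges is labelled $+$ or $-$; its signed adjacency matrix $M(\mathcal{S})$ has $(u,v)$-entry $1$ for a $(+)$-edge, $-1$ for a $(-)$-edge, $0$ otherwise, and $\lambda_{\min}(\mathcal{S})$ denotes its smallest eigenvalue. For non-negative integers $p,q,r$ with $p+q\le r$, $\mathcal{Q}_{p,q,r}$ is the edge-signed graph defined as follows: its vertex set is a disjoint union $V_p\cup V_q\cup V_r$ with $|V_p|=p$, $|V_q|=q$, $|V_r|=r$; choose disjoint subsets $U_p,U_q\subseteq V_r$ with $|U_p|=p$, $|U_q|=q$ and bijections $\sigma:V_p\to U_p$, $\rho:V_q\to U_q$. The $(+)$-edges are all pairs of distinct vertices of $V_r$ together with the pairs $\{v,\sigma(v)\}$, $v\in V_p$; the $(-)$-edges are the pairs $\{v,\rho(v)\}$, $v\in V_q$; there are no other edges. *)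

theory Defs
  imports Complex_Main "Jordan_Normal_Form.Matrix" "Jordan_Normal_Form.Char_Poly"
begin

text \<open>Edge-signed graphs on vertex set {0..<n}: a sign function
  sgn_edge :: nat => nat => int with values in {-1,0,1}, symmetric, zero on the diagonal
  (0 = no edge, 1 = positive edge, -1 = negative edge).\<close>

definition signed_adj_matrix :: "nat \<Rightarrow> (nat \<Rightarrow> nat \<Rightarrow> int) \<Rightarrow> real mat" where
  "signed_adj_matrix n s = mat n n (\<lambda>(i, j). real_of_int (s i j))"

text \<open>The signed graph Q_{p,q,r}, on vertices {0..<r+p+q}:
  V_r = {0..<r} (a positive clique), U_p = {0..<p}, U_q = {p..<p+q},
  V_p = {r..<r+p} with sigma(r+i) = i, V_q = {r+p..<r+p+q} with rho(r+p+i) = p+i.\<close>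

definition Q_sign :: "nat \<Rightarrow> nat \<Rightarrow> nat \<Rightarrow> nat \<Rightarrow> nat \<Rightarrow> int" where
  "Q_sign p q r u v =
     (if u < r \<and> v < r \<and> u \<noteq> v then 1
      else if (r \<le> u \<and> u < r + p \<and> v = u - r) \<or> (r \<le> v \<and> v < r + p \<and> u = v - r) then 1
      else if (r + p \<le> u \<and> u < r + p + q \<and> v = u - r) \<or> (r + p \<le> v \<and> v < r + p + q \<and> u = v - r) then -1
      else 0)"

definition Q_matrix :: "nat \<Rightarrow> nat \<Rightarrow> nat \<Rightarrow> real mat" where
  "Q_matrix p q r = signed_adj_matrix (p + q + r) (Q_sign p q r)"

end

theory Submission
  imports Defs
begin

lemma L1:
  assumes "p + q \<le> r" "i < r"
  shows "(\<Sum>j<p+q+r. real_of_int (Q_sign p q r i j) * w j) =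
     (\<Sum>j<r. w j) - w i + (if i<p then w(r+i) else if i<p+q then - w(r+i) else 0)"
proof -
  have split: "{..<p+q+r} = {..<r} \<union> {r..<p+q+r}" by auto
  have "(\<Sum>j<p+q+r. real_of_int (Q_sign p q r i j) * w j) =
      (\<Sum>j<r. real_of_int (Q_sign p q r i j) * w j) + (\<Sum>j\<in>{r..<p+q+r}. real_of_int (Q_sign p q r i j) * w j)"
    unfolding split by (rule sum.union_disjoint) auto
  also have "(\<Sum>j<r. real_of_int (Q_sign p q r i j) * w j) = (\<Sum>j<r. w j - (if j = i then w j else 0))"
    by (rule sum.cong) (use assms in \<open>auto simp: Q_sign_def\<close>)
  also have "\<dots> = (\<Sum>j<r. w j) - w i"
    using assms by (simp add: sum_subtractf)
  also have "(\<Sum>j\<in>{r..<p+q+r}. real_of_int (Q_sign p q r i j) * w j) =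
     (\<Sum>j\<in>{r..<p+q+r}. if j = r + i then (if i<p then w(r+i) else if i<p+q then - w(r+i) else 0) else 0)"
    by (rule sum.cong) (use assms in \<open>auto simp: Q_sign_def\<close>)
  also have "\<dots> = (if i<p then w(r+i) else if i<p+q then - w(r+i) else 0)"
    by (subst sum.delta) auto
  finally show ?thesis .
qed

lemma L2:
  assumes "p + q \<le> r" "i < p"
  shows "(\<Sum>j<p+q+r. real_of_int (Q_sign p q r (r+i) j) * w j) = w i"
proof -
  have "(\<Sum>j<p+q+r. real_of_int (Q_sign p q r (r+i) j) * w j) = (\<Sum>j<p+q+r. if j = i then w i else 0)"
    by (rule sum.cong) (use assms in \<open>auto simp: Q_sign_def\<close>)
  also have "\<dots> = w i" using assms by (subst sum.delta) auto
  finally show ?thesis .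
qed

lemma L3:
  assumes "p + q \<le> r" "i < q"
  shows "(\<Sum>j<p+q+r. real_of_int (Q_sign p q r (r+p+i) j) * w j) = - w (p+i)"
proof -
  have "(\<Sum>j<p+q+r. real_of_int (Q_sign p q r (r+p+i) j) * w j) = (\<Sum>j<p+q+r. if j = p+i then - w (p+i) else 0)"
    by (rule sum.cong) (use assms in \<open>auto simp: Q_sign_def\<close>)
  also have "\<dots> = - w (p+i)" using assms by (subst sum.delta) auto
  finally show ?thesis .
qed


lemma E:
  assumes ev: "eigenvector (Q_matrix p q r) v mu" and k: "k < p+q+r"
  shows "(\<Sum>j<p+q+r. real_of_int (Q_sign p q r k j) * v$j) = mu * v$k"
proof -
  have dr: "dim_row (Q_matrix p q r) = p+q+r" by (simp add: Q_matrix_def signed_adj_matrix_def)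
  from ev have vc: "v \<in> carrier_vec (p+q+r)" and eq: "Q_matrix p q r *\<^sub>v v = mu \<cdot>\<^sub>v v"
    unfolding eigenvector_def dr by auto
  have "(Q_matrix p q r *\<^sub>v v) $ k = mu * v$k" using eq k vc by (metis carrier_vecD index_smult_vec(1))
  moreover have "(Q_matrix p q r *\<^sub>v v) $ k = (\<Sum>j<p+q+r. real_of_int (Q_sign p q r k j) * v$j)"
    using k vc by (auto simp: Q_matrix_def signed_adj_matrix_def scalar_prod_def lessThan_atLeast0 intro!: sum.cong)
  ultimately show ?thesis by simp
qed

theorem mainTheorem5:
  fixes p q r :: nat
  assumes "p + q \<le> r"
  shows "\<forall>mu. eigenvalue (Q_matrix p q r) mu \<longrightarrow> mu \<ge> - ((1 + sqrt 5) / 2)"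
proof (intro allI impI, rule ccontr)
  fix mu assume "eigenvalue (Q_matrix p q r) mu" and lt: "\<not> mu \<ge> - ((1 + sqrt 5) / 2)"
  then obtain v where ev: "eigenvector (Q_matrix p q r) v mu" unfolding eigenvalue_def by auto
  define n where "n = p+q+r"
  have dr: "dim_row (Q_matrix p q r) = n" by (simp add: Q_matrix_def signed_adj_matrix_def n_def)
  from ev have vc: "v \<in> carrier_vec n" and nz: "v \<noteq> 0\<^sub>v n"
    unfolding eigenvector_def dr by auto
  define w where "w = (\<lambda>j. v$j)"
  define S where "S = (\<Sum>j<r. w j)"
  have s5: "sqrt 5 * sqrt 5 = 5" by simp
  have s5p: "sqrt 5 > 1" by (simp add: real_less_rsqrt)
  have lt2: "mu < -((1+sqrt 5)/2)" using lt by simp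
  have lt3: "mu * 2 + sqrt 5 < - 1" using lt2 by (simp add: field_simps)
  have mu1: "mu + 1 < 0" using lt3 s5p by linarith
  have mu0: "mu < 0" using mu1 by linarith
  have quad: "mu*mu + mu - 1 > 0"
  proof -
    have id: "mu*mu + mu - 1 = (mu + (1 + sqrt 5)/2) * (mu + 1 - (1 + sqrt 5)/2)"
      using s5 by (simp add: field_simps)
    have h0: "1 + mu*2 < sqrt 5" using lt3 s5p by linarith
    have a: "mu + (1 + sqrt 5)/2 < 0" using lt3 by (simp add: field_simps)
    have b: "mu + 1 - (1 + sqrt 5)/2 < 0" using h0 by (simp add: field_simps)
    show ?thesis unfolding id using mult_neg_neg[OF a b] .
  qed
  have Ep: "w i = mu * w (r+i)" if "i<p" for i
    using L2[OF assms that, of w] E[OF ev, of "r+i"] that unfolding w_def by auto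
  have Eq: "- w (p+i) = mu * w (r+p+i)" if "i<q" for i
    using L3[OF assms that, of w] E[OF ev, of "r+p+i"] that unfolding w_def by auto
  define d where "d i = mu + 1 - (if i<p+q then 1/mu else 0)" for i
  have dneg: "d i < 0" for i
  proof (cases "i < p+q")
    case True
    have "mu + 1 - 1/mu = (mu*mu + mu - 1)/mu" using mu0 by (simp add: field_simps)
    also have "\<dots> < 0" using quad mu0 by (simp add: divide_pos_neg)
    finally show ?thesis using True by (simp add: d_def)
  qed (use mu1 in \<open>simp add: d_def\<close>)
  have Sd: "S = d i * w i" if "i<r" for i
  proof -
    have c: "(if i<p then w(r+i) else if i<p+q then - w(r+i) else 0) = (if i<p+q then w i/mu else 0)"
    proof (cases "i<p")
      case True then show ?thesis using Ep[OF True] mu0 by simp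
    next
      case False
      show ?thesis
      proof (cases "i<p+q")
        case True
        have "i - p < q" using True False by simp
        then have "- w (p+(i-p)) = mu * w (r+p+(i-p))" by (rule Eq)
        then have "- w i = mu * w (r+i)" using False by simp
        then show ?thesis using True False mu0 by (simp add: field_simps)
      qed (use False in simp)
    qed
    have "S - w i + (if i<p+q then w i/mu else 0) = mu * w i"
      using L1[OF assms that, of w] E[OF ev, of i] that c unfolding w_def S_def by auto
    then show ?thesis unfolding d_def by (auto simp: algebra_simps split: if_splits)
  qed
  have "S*S = (\<Sum>i<r. S * w i)" by (simp add: S_def sum_distrib_left)
  also have "\<dots> = (\<Sum>i<r. d i * (w i * w i))" by (rule sum.cong) (auto simp: Sd)
  also have "\<dots> \<le> 0" by (rule sum_nonpos) (simp add: dneg mult_nonpos_nonneg less_imp_le)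
  finally have "S = 0" by (metis not_real_square_gt_zero linorder_not_le)
  then have w0: "w i = 0" if "i<r" for i using Sd[OF that] dneg[of i] by simp
  have "w k = 0" if kn: "k < n" for k
  proof -
    consider "k<r" | i where "i<p" "k = r+i" | i where "i<q" "k = r+p+i"
    proof -
      have "k < r \<or> (k - r < p \<and> k = r + (k - r)) \<or> (k - r - p < q \<and> k = r + p + (k - r - p))"
        using kn unfolding n_def by linarith
      then show ?thesis using that by blast
    qed
    then show ?thesis
    proof cases
      case 1 then show ?thesis by (rule w0)
    next
      case (2 i) then show ?thesis using Ep[of i] w0[of i] assms mu0 by auto
    next
      case (3 i) then show ?thesis using Eq[of i] w0[of "p+i"] assms mu0 by auto
    qed
  qed
  then have "v = 0\<^sub>v n" using vc by (intro eq_vecI) (auto simp: w_def)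
  with nz show False by simp
qed

end
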